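(* In the setting described in the context, for all $g,g'\in\mathcal{G}$, $$(g'\circ g)_\star\nu=g'_\star\big(g_\star\nu\big).$$
   Context: Let $(\mathcal{X},\Sigma)$ be a measurable space, $\Phi^t$ a flow on $\mathcal{X}$ (bijective measurable maps, $\Phi^{t_1}\circ\Phi^{t_2}=\Phi^{t_1+t_2}$, jointly measurable), $f_\sharp$ push-forward, $\mu$ an invariant probability measure ($\Phi^t_\sharp\mu=\mu$ for all $t$). Let $h^a$, $a>0$, be bijective measurable maps and $\mathcal{G}$ a group of bijective measurable maps of $\mathcal{X}$ with $h^{a_1}\circ h^{a_2}=h^{a_1a_2}$, $\Phi^t\circ g=g\circ\Phi^t$, $g\circ h^a=h^a\circ g$, $\Phi^t\circ h^a=h^a\circ\Phi^{t/a}$ for all $a,a_1,a_2>0$, $t$, $g\in\mathcal{G}$. $\mathcal{Y}\subset\mathcal{X}$ is a representative set: for every $x$ there is a unique $a=A(x)>0$ with $h^a(x)\in\mathcal{Y}$, $A$ measurable with $\int A\,d\mu<\infty$; $P(x)=h^{A(x)}(x)$. Standing assumption: $\int A\circ g\,d\mu<\infty$ for every $g\in\mathcal{G}$. For a measure $\rho$ and positive measurable $B$ with $0<\int B\,d\rho<\infty$, $\rho_B$ is the probability measure with $d\rho_B/d\rho=B/\int B\,d\rho$. Let $\nu=P_\sharp\mu_A$ (the invariant measure of the normalized flow $P\circ\Phi^\tau_A$ on $\mathcal{Y}$). For $g\in\mathcal{G}$ and a probability measure $\rho$ on $\mathcal{Y}$ with $\int A\circ g\,d\rho<\infty$, define $g_\star\rho=(P\circ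 g)_\sharp\rho_{A\circ g}$; under the standing assumption, all measures in the claim are well defined. *)

theory Defs
  imports "HOL-Probability.Probability"
begin

definition reweight :: "'a measure \<Rightarrow> ('a \<Rightarrow> real) \<Rightarrow> 'a measure" where
  "reweight \<rho> B = density \<rho> (\<lambda>x. ennreal (B x / (\<integral>y. B y \<partial>\<rho>)))"

definition proj :: "(real \<Rightarrow> 'a \<Rightarrow> 'a) \<Rightarrow> ('a \<Rightarrow> real) \<Rightarrow> 'a \<Rightarrow> 'a" where
  "proj h A x = h (A x) x"

definition gstar :: "'a measure \<Rightarrow> (real \<Rightarrow> 'a \<Rightarrow> 'a) \<Rightarrow> ('a \<Rightarrow> real) \<Rightarrow> ('a \<Rightarrow> 'a)
    \<Rightarrow> 'a measure \<Rightarrow> 'a measure" where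
  "gstar M h A g \<rho> = distr (reweight \<rho> (A \<circ> g)) M (proj h A \<circ> g)"

end

theory Submission
  imports Defs
begin


lemma em_reweight:
  assumes B: "B \<in> borel_measurable \<rho>" and T: "T \<in> \<rho> \<rightarrow>\<^sub>M M" and S: "S \<in> sets M"
  shows "emeasure (distr (reweight \<rho> B) M T) S
     = (\<integral>\<^sup>+ y. ennreal (B y / (\<integral>z. B z \<partial>\<rho>)) * indicator S (T y) \<partial>\<rho>)"
proof -
  have T': "T \<in> reweight \<rho> B \<rightarrow>\<^sub>M M"
    unfolding reweight_def measurable_cong_sets[OF sets_density refl] by (rule T)
  have "emeasure (distr (reweight \<rho> B) M T) S = emeasure (reweight \<rho> B) (T -` S \<inter> space \<rho>)"
    using emeasure_distr[OF T' S] by (simp add: reweight_def)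
  also have "\<dots> = (\<integral>\<^sup>+ y. ennreal (B y / (\<integral>z. B z \<partial>\<rho>)) * indicator (T -` S \<inter> space \<rho>) y \<partial>\<rho>)"
    unfolding reweight_def
  proof (rule emeasure_density)
    note [measurable] = B
    show "(\<lambda>y. ennreal (B y / (\<integral>z. B z \<partial>\<rho>))) \<in> borel_measurable \<rho>" by measurable
    show "T -` S \<inter> space \<rho> \<in> sets \<rho>" by (rule measurable_sets[OF T S])
  qed
  also have "\<dots> = (\<integral>\<^sup>+ y. ennreal (B y / (\<integral>z. B z \<partial>\<rho>)) * indicator S (T y) \<partial>\<rho>)"
    by (rule nn_integral_cong) (auto split: split_indicator)
  finally show ?thesis .
qed

theorem corollary1:
  fixes M :: "'a measure" and \<mu> :: "'a measure"
    and \<Phi> :: "real \<Rightarrow> 'a \<Rightarrow> 'a" and h :: "real \<Rightarrow> 'a \<Rightarrow> 'a"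
    and G :: "('a \<Rightarrow> 'a) set" and Y :: "'a set" and A :: "'a \<Rightarrow> real"
  assumes flow_meas: "\<And>t. \<Phi> t \<in> M \<rightarrow>\<^sub>M M"
    and flow_bij: "\<And>t. bij_betw (\<Phi> t) (space M) (space M)"
    and flow_comp: "\<And>t1 t2 x. x \<in> space M \<Longrightarrow> \<Phi> t1 (\<Phi> t2 x) = \<Phi> (t1 + t2) x"
    and flow_joint: "(\<lambda>(t, x). \<Phi> t x) \<in> (borel \<Otimes>\<^sub>M M) \<rightarrow>\<^sub>M M"
    and mu_prob: "prob_space \<mu>" and mu_sets: "sets \<mu> = sets M"
    and mu_inv: "\<And>t. distr \<mu> M (\<Phi> t) = \<mu>"
    and h_meas: "\<And>a. a > 0 \<Longrightarrow> h a \<in> M \<rightarrow>\<^sub>M M"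
    and h_bij: "\<And>a. a > 0 \<Longrightarrow> bij_betw (h a) (space M) (space M)"
    and h_comp: "\<And>a1 a2 x. a1 > 0 \<Longrightarrow> a2 > 0 \<Longrightarrow> x \<in> space M \<Longrightarrow> h a1 (h a2 x) = h (a1 * a2) x"
    and G_meas: "\<And>g. g \<in> G \<Longrightarrow> g \<in> M \<rightarrow>\<^sub>M M"
    and G_bij: "\<And>g. g \<in> G \<Longrightarrow> bij_betw g (space M) (space M)"
    and G_id: "id \<in> G"
    and G_comp: "\<And>g1 g2. g1 \<in> G \<Longrightarrow> g2 \<in> G \<Longrightarrow> g1 \<circ> g2 \<in> G"
    and G_inv: "\<And>g. g \<in> G \<Longrightarrow> \<exists>g'\<in>G. \<forall>x\<in>space M. g' (g x) = x \<and> g (g' x) = x"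
    and flow_G: "\<And>t g x. g \<in> G \<Longrightarrow> x \<in> space M \<Longrightarrow> \<Phi> t (g x) = g (\<Phi> t x)"
    and h_G: "\<And>a g x. a > 0 \<Longrightarrow> g \<in> G \<Longrightarrow> x \<in> space M \<Longrightarrow> g (h a x) = h a (g x)"
    and flow_h: "\<And>t a x. a > 0 \<Longrightarrow> x \<in> space M \<Longrightarrow> \<Phi> t (h a x) = h a (\<Phi> (t / a) x)"
    and Y_sets: "Y \<in> sets M"
    and A_meas: "A \<in> borel_measurable M"
    and A_pos: "\<And>x. x \<in> space M \<Longrightarrow> A x > 0"
    and A_rep: "\<And>x. x \<in> space M \<Longrightarrow> h (A x) x \<in> Y"
    and A_unique: "\<And>x a. x \<in> space M \<Longrightarrow> a > 0 \<Longrightarrow> h a x \<in> Y \<Longrightarrow> a = A x"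
    and P_meas: "proj h A \<in> M \<rightarrow>\<^sub>M M"
    and A_int: "integrable \<mu> A"
    and A_g_int: "\<And>g. g \<in> G \<Longrightarrow> integrable \<mu> (A \<circ> g)"
    and g: "g \<in> G" and g': "g' \<in> G"
  shows "gstar M h A (g' \<circ> g) (distr (reweight \<mu> A) M (proj h A))
       = gstar M h A g' (gstar M h A g (distr (reweight \<mu> A) M (proj h A)))"
proof -
  let ?P = "proj h A"
  have Ahx: "A (h a x) = A x / a" if x: "x \<in> space M" and a: "a > 0" for a x
  proof -
    have hx: "h a x \<in> space M" using h_meas[OF a] x by (auto dest: measurable_space)
    have "h (A x / a) (h a x) = h (A x) x"
      using h_comp[of "A x / a" a x] a A_pos[OF x] x by simp
    then show ?thesis using A_unique[OF hx, of "A x / a"] A_rep[OF x] a A_pos[OF x] by simp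
  qed
  have Ph: "?P (h a x) = ?P x" if x: "x \<in> space M" and a: "a > 0" for a x
    using h_comp[of "A x / a" a x] a A_pos[OF x] x Ahx[OF x a] by (simp add: proj_def)
  have gsp: "g x \<in> space M" if "g \<in> G" "x \<in> space M" for g x
    using G_meas[OF that(1)] that(2) by (auto dest: measurable_space)
  have AgP: "A (g (?P x)) = A (g x) / A x" and PgP: "?P (g (?P x)) = ?P (g x)"
    if gG: "g \<in> G" and x: "x \<in> space M" for g x
  proof -
    have "g (?P x) = h (A x) (g x)" using h_G[OF A_pos[OF x] gG x] by (simp add: proj_def)
    then show "A (g (?P x)) = A (g x) / A x" "?P (g (?P x)) = ?P (g x)"
      using Ahx[OF gsp[OF gG x] A_pos[OF x]] Ph[OF gsp[OF gG x] A_pos[OF x]] by simp_all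
  qed
  interpret prob_space \<mu> by (rule mu_prob)
  have sp: "space \<mu> = space M" using mu_sets by (rule sets_eq_imp_space_eq)
  have Agm: "(\<lambda>x. A (g x)) \<in> borel_measurable M" if "g \<in> G" for g
    using measurable_comp[OF G_meas[OF that] A_meas] by (simp add: comp_def)
  have Agpos: "A (g x) > 0" if "g \<in> G" "x \<in> space \<mu>" for g x
    using A_pos gsp that sp by auto
  have cpos: "(\<integral>x. A (g x) \<partial>\<mu>) > 0" if gG: "g \<in> G" for g
  proof -
    have int: "integrable \<mu> (\<lambda>x. A (g x))" using A_g_int[OF gG] by (simp add: comp_def)
    have nn: "0 \<le> (\<integral>x. A (g x) \<partial>\<mu>)"
      using Agpos[OF gG] by (intro integral_nonneg_AE AE_I2) (simp add: less_imp_le)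
    have "(\<integral>x. A (g x) \<partial>\<mu>) \<noteq> 0"
    proof
      assume "(\<integral>x. A (g x) \<partial>\<mu>) = 0"
      then have "AE x in \<mu>. A (g x) = 0"
        using integral_nonneg_eq_0_iff_AE[OF int] Agpos[OF gG] AE_I2[of \<mu> "\<lambda>x. 0 \<le> A (g x)"] by (simp add: less_imp_le)
      then have "AE x in \<mu>. False"
        using Agpos[OF gG] by (elim AE_mp) (auto intro!: AE_I2 dest!: Agpos[OF gG])
      then show False using AE_False by simp
    qed
    with nn show ?thesis by simp
  qed
  have PGm: "?P \<circ> g \<in> \<mu> \<rightarrow>\<^sub>M M" if "g \<in> G" for g
    unfolding measurable_cong_sets[OF mu_sets refl] using measurable_comp[OF G_meas[OF that] P_meas] .
  have AGm: "A \<circ> g \<in> borel_measurable \<mu>" if "g \<in> G" for g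
    unfolding measurable_cong_sets[OF mu_sets refl] using measurable_comp[OF G_meas[OF that] A_meas] .
  have L: "gstar M h A g' (distr (reweight \<mu> (A \<circ> g)) M (?P \<circ> g))
      = distr (reweight \<mu> (A \<circ> (g' \<circ> g))) M (?P \<circ> (g' \<circ> g))"
    if gG: "g \<in> G" and g'G: "g' \<in> G" for g g'
  proof -
    define c0 where "c0 = (\<integral>x. A (g x) \<partial>\<mu>)"
    define c1 where "c1 = (\<integral>x. A (g' (g x)) \<partial>\<mu>)"
    have c0: "c0 > 0" using cpos[OF gG] by (simp add: c0_def)
    have c1: "c1 > 0" using cpos[OF G_comp[OF g'G gG]] by (simp add: c1_def)
    let ?RA = "reweight \<mu> (A \<circ> g)"
    let ?RB = "distr ?RA M (?P \<circ> g)"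
    have rw0: "?RA = density \<mu> (\<lambda>x. ennreal (A (g x) / c0))"
      by (simp add: reweight_def c0_def)
    have Pg0: "?P \<circ> g \<in> ?RA \<rightarrow>\<^sub>M M"
      unfolding measurable_cong_sets[OF sets_density[of \<mu>] refl] reweight_def using PGm[OF gG] .
    have Ag'M: "A \<circ> g' \<in> borel_measurable M"
      using measurable_comp[OF G_meas[OF g'G] A_meas] .
    have Agc0: "(\<lambda>x. A (g x) / c0) \<in> borel_measurable \<mu>"
      using AGm[OF gG] by (simp add: comp_def)
    have fm: "(\<lambda>x. A (g' (?P (g x)))) \<in> borel_measurable \<mu>"
      using measurable_comp[OF PGm[OF gG] Ag'M] by (simp add: comp_def)
    have c: "(\<integral>y. (A \<circ> g') y \<partial>?RB) = c1 / c0"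
    proof -
      have "(\<integral>y. (A \<circ> g') y \<partial>?RB) = (\<integral>x. A (g' (?P (g x))) \<partial>?RA)"
        using integral_distr[OF Pg0 Ag'M] by (simp add: comp_def)
      also have "\<dots> = (\<integral>x. (A (g x) / c0) *\<^sub>R A (g' (?P (g x))) \<partial>\<mu>)"
        unfolding rw0
        by (rule integral_density[OF fm Agc0])
          (use c0 Agpos[OF gG] in \<open>auto intro!: AE_I2 less_imp_le\<close>)
      also have "\<dots> = (\<integral>x. A (g' (g x)) / c0 \<partial>\<mu>)"
      proof (rule Bochner_Integration.integral_cong)
        fix x assume x: "x \<in> space \<mu>"
        have gx: "g x \<in> space M" using gsp[OF gG] x sp by auto
        show "(A (g x) / c0) *\<^sub>R A (g' (?P (g x))) = A (g' (g x)) / c0"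
          using AgP[OF g'G gx] Agpos[OF gG x] by simp
      qed simp
      also have "\<dots> = c1 / c0" by (simp add: c1_def)
      finally show ?thesis .
    qed
    show ?thesis
    proof (rule measure_eqI)
      show "sets (gstar M h A g' ?RB) = sets (distr (reweight \<mu> (A \<circ> (g' \<circ> g))) M (?P \<circ> (g' \<circ> g)))"
        by (simp add: gstar_def)
      fix S assume "S \<in> sets (gstar M h A g' ?RB)"
      then have S: "S \<in> sets M" by (simp add: gstar_def)
      have Ag'\<rho>: "A \<circ> g' \<in> borel_measurable ?RB"
        using Ag'M by simp
      have Pg'\<rho>: "?P \<circ> g' \<in> ?RB \<rightarrow>\<^sub>M M"
        using measurable_comp[OF G_meas[OF g'G] P_meas] by simp
      have "emeasure (gstar M h A g' ?RB) S
          = (\<integral>\<^sup>+ y. ennreal ((A \<circ> g') y / (c1 / c0)) * indicator S ((?P \<circ> g') y) \<partial>?RB)"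
        unfolding gstar_def em_reweight[OF Ag'\<rho> Pg'\<rho> S] c ..
      also have "\<dots> = (\<integral>\<^sup>+ x. (\<lambda>y. ennreal ((A \<circ> g') y / (c1 / c0)) * indicator S ((?P \<circ> g') y)) ((?P \<circ> g) x) \<partial>?RA)"
      proof (rule nn_integral_distr[OF Pg0])
        have Pg'M: "?P \<circ> g' \<in> M \<rightarrow>\<^sub>M M" using Pg'\<rho> by simp
        have m1: "(\<lambda>y. A (g' y)) \<in> borel_measurable M" using Ag'M by (simp add: comp_def)
        have m2: "(\<lambda>y. ?P (g' y)) \<in> M \<rightarrow>\<^sub>M M" using Pg'M by (simp add: comp_def)
        note [measurable] = m1 m2 S
        show "(\<lambda>y. ennreal ((A \<circ> g') y / (c1 / c0)) * indicator S ((?P \<circ> g') y)) \<in> borel_measurable ?RB"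
          unfolding comp_def by simp measurable
      qed
      also have "\<dots> = (\<integral>\<^sup>+ x. ennreal (A (g' (?P (g x))) / (c1 / c0)) * indicator S (?P (g' (?P (g x)))) \<partial>?RA)"
        by simp
      also have "\<dots> = (\<integral>\<^sup>+ x. ennreal (A (g x) / c0) * (ennreal (A (g' (?P (g x))) / (c1 / c0)) * indicator S (?P (g' (?P (g x))))) \<partial>\<mu>)"
        unfolding rw0
      proof (rule nn_integral_density)
        show "(\<lambda>x. ennreal (A (g x) / c0)) \<in> borel_measurable \<mu>" using Agc0 by simp
        have Pg'M: "?P \<circ> g' \<in> M \<rightarrow>\<^sub>M M" using Pg'\<rho> by simp
        have PgM: "?P \<circ> g \<in> \<mu> \<rightarrow>\<^sub>M M" by (rule PGm[OF gG])
        have c1: "(\<lambda>y. ennreal ((A \<circ> g') y / (c1 / c0)) * indicator S ((?P \<circ> g') y)) \<in> borel_measurable M"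
        proof -
          have m1: "(\<lambda>y. A (g' y)) \<in> borel_measurable M" using Ag'M by (simp add: comp_def)
          have m2: "(\<lambda>y. ?P (g' y)) \<in> M \<rightarrow>\<^sub>M M" using Pg'M by (simp add: comp_def)
          note [measurable] = m1 m2 S
          show ?thesis unfolding comp_def by measurable
        qed
        show "(\<lambda>x. ennreal (A (g' (?P (g x))) / (c1 / c0)) * indicator S (?P (g' (?P (g x))))) \<in> borel_measurable \<mu>"
          using measurable_comp[OF PgM c1] by (simp add: comp_def)
      qed
      also have "\<dots> = (\<integral>\<^sup>+ x. ennreal (A (g' (g x)) / c1) * indicator S (?P (g' (g x))) \<partial>\<mu>)"
      proof (rule nn_integral_cong)
        fix x assume x: "x \<in> space \<mu>"
        have gx: "g x \<in> space M" using gsp[OF gG] x sp by auto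
        have a: "A (g x) > 0" using Agpos[OF gG x] .
        have eq: "A (g x) / c0 * (A (g' (?P (g x))) / (c1 / c0)) = A (g' (g x)) / c1"
          using AgP[OF g'G gx] a c0 c1 by (simp add: field_simps)
        have "ennreal (A (g x) / c0) * ennreal (A (g' (?P (g x))) / (c1 / c0))
            = ennreal (A (g' (g x)) / c1)"
          using a c0 c1 AgP[OF g'G gx] eq A_pos[OF gsp[OF g'G gx]]
          by (subst ennreal_mult[symmetric]) (auto intro!: divide_nonneg_pos)
        then show "ennreal (A (g x) / c0) * (ennreal (A (g' (?P (g x))) / (c1 / c0)) * indicator S (?P (g' (?P (g x)))))
          = ennreal (A (g' (g x)) / c1) * indicator S (?P (g' (g x)))"
          using PgP[OF g'G gx] by (simp add: mult.assoc[symmetric])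
      qed
      also have "\<dots> = emeasure (distr (reweight \<mu> (A \<circ> (g' \<circ> g))) M (?P \<circ> (g' \<circ> g))) S"
        using em_reweight[OF AGm[OF G_comp[OF g'G gG]] PGm[OF G_comp[OF g'G gG]] S]
        by (simp add: c1_def)
      finally show "emeasure (gstar M h A g' ?RB) S = emeasure (distr (reweight \<mu> (A \<circ> (g' \<circ> g))) M (?P \<circ> (g' \<circ> g))) S" .
    qed
  qed
  have \<nu>: "distr (reweight \<mu> A) M ?P = distr (reweight \<mu> (A \<circ> id)) M (?P \<circ> id)" by simp
  have "gstar M h A g (distr (reweight \<mu> A) M ?P) = distr (reweight \<mu> (A \<circ> g)) M (?P \<circ> g)"
    using L[OF G_id g] unfolding \<nu> by simp
  then show ?thesis
    using L[OF G_id G_comp[OF g' g]] L[OF g g'] unfolding \<nu> by (simp add: o_assoc)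
qed

end
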